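(* Let $n\ge 2$ and let $X\subseteq\mathbb{Z}_{2n}^2$ with $|X|=4n+1$. Suppose there is $a\in\mathbb{Z}_{2n}$ such that exactly $2n-1$ elements of $X$ have first coordinate $a$. Then there exists $S\subseteq X$ with $|S|=2n$ and $\sum_{s\in S}s=(0,0)$. *)

theory Defs
  imports Main
begin

text \<open>The group Z_m (m > 0) is represented by the canonical residues {0..<m} of int;
  Z_m^2 is represented by pairs of such residues.\<close>

definition Zmod_sq :: "int \<Rightarrow> (int \<times> int) set" where
  "Zmod_sq m = {0..<m} \<times> {0..<m}"

definition zero_sum_mod :: "int \<Rightarrow> (int \<times> int) set \<Rightarrow> bool" where
  "zero_sum_mod m S \<longleftrightarrow> (\<Sum>s\<in>S. fst s) mod m = 0 \<and> (\<Sum>s\<in>S. snd s) mod m = 0"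

end

theory Submission
  imports Defs
begin

lemma interval_sums:
  fixes N j s :: nat
  assumes "j \<le> N" "(\<Sum>{0..<j}) \<le> s" "s \<le> (\<Sum>{0..<j}) + j*(N-j)"
  shows "\<exists>J \<subseteq> {0..<N}. card J = j \<and> \<Sum>J = s"
  using assms
proof (induction N arbitrary: j s)
  case 0
  then show ?case by auto
next
  case (Suc N)
  show ?case
  proof (cases "j \<le> N \<and> s \<le> (\<Sum>{0..<j}) + j*(N-j)")
    case True
    then obtain J where "J \<subseteq> {0..<N}" "card J = j" "\<Sum>J = s" using Suc.IH Suc.prems by blast
    then show ?thesis by (intro exI[of _ J]) auto
  next
    case False
    have j0: "j \<noteq> 0" using False Suc.prems by (cases j) auto
    then obtain j' where j': "j = Suc j'" by (cases j) auto
    have tri: "(\<Sum>{0..<j}) = (\<Sum>{0..<j'}) + j'" using j' by simp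
    have jN: "j' \<le> N" using Suc.prems j' by simp
    then obtain d where d: "N = j' + d" using le_Suc_ex by blast
    have lo0: "(\<Sum>{0..<j'}) + N \<le> s"
    proof (cases "d = 0")
      case True
      then show ?thesis using Suc.prems tri d by simp
    next
      case False
      then have "s > (\<Sum>{0..<j'}) + j' + (j'+1)*(d - 1)" using False \<open>\<not> (j \<le> N \<and> _)\<close> tri d j' by auto
      moreover have "(j'+1)*(d-1) \<ge> d - 1" by simp
      ultimately show ?thesis using d False by linarith
    qed
    have lo: "(\<Sum>{0..<j'}) \<le> s - N" using lo0 by linarith
    have hi: "s - N \<le> (\<Sum>{0..<j'}) + j'*(N-j')"
    proof -
      have "s \<le> (\<Sum>{0..<j'}) + j' + (j'+1)*d" using Suc.prems(3) tri d j' by simp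
      moreover have "j'*(N - j') = j'*d" using d by simp
      moreover have "(j'+1)*d = j'*d + d" by simp
      ultimately show ?thesis using d by linarith
    qed
    obtain J where J: "J \<subseteq> {0..<N}" "card J = j'" "\<Sum>J = s - N"
      using Suc.IH[OF jN lo hi] by blast
    have "N \<notin> J" using J by auto
    moreover have "s \<ge> N" using lo0 by linarith 
    ultimately show ?thesis using J j'
      by (intro exI[of _ "insert N J"]) (auto simp: finite_subset)
  qed
qed



lemma pigeon:
  fixes f :: "nat \<Rightarrow> int" and M :: nat
  assumes "0 < M" and dist: "\<And>i j. i < j \<Longrightarrow> j < M \<Longrightarrow> f i mod int M \<noteq> f j mod int M"
    and "0 \<le> r" "r < int M"
  shows "\<exists>i<M. f i mod int M = r"
proof -
  let ?g = "\<lambda>i. f i mod int M"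
  have inj: "inj_on ?g {0..<M}"
    unfolding inj_on_def by (metis atLeastLessThan_iff dist linorder_neqE_nat)
  have sub: "?g ` {0..<M} \<subseteq> {0..<int M}" using assms(1) by auto
  have "card (?g ` {0..<M}) = card {0..<int M}" using card_image[OF inj] by simp
  then have "?g ` {0..<M} = {0..<int M}" using card_subset_eq[OF _ sub] by simp
  then have "r \<in> ?g ` {0..<M}" using assms by auto
  then show ?thesis by auto
qed

lemma same_res:
  fixes u v a m :: int
  assumes "0 \<le> u" "u < m" "0 \<le> v" "v < m" "(u - a) mod m = (v - a) mod m"
  shows "u = v"
proof -
  have "m dvd (u - a) - (v - a)" using assms(5) mod_eq_dvd_iff by blast
  then have "m dvd u - v" by simp
  then have "u mod m = v mod m" using mod_eq_dvd_iff by blast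
  then show ?thesis using assms by simp
qed

lemma AS_core:
  fixes N j :: nat and b r :: int
  assumes "2 \<le> j" "j + 3 \<le> N" "0 \<le> b" "b < int N"
  shows "\<exists>V \<subseteq> {0..<int N} - {b}. card V = j \<and> (\<Sum>V) mod int N = r mod int N"
proof -
  define m where "m = int N"
  have m0: "0 < m" using assms m_def by simp
  define g where "g i = (b + 1 + int i) mod m" for i :: nat
  have ginj: "inj_on g {0..<N-1}"
  proof (rule inj_onI)
    fix i i' assume "i \<in> {0..<N-1}" "i' \<in> {0..<N-1}" "g i = g i'"
    then have "(b + 1 + int i) mod m = (b + 1 + int i') mod m" unfolding g_def by simp
    then have "m dvd (b + 1 + int i) - (b + 1 + int i')" by (simp only: mod_eq_dvd_iff)
    then have "m dvd int i - int i'" by simp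
    then have "int i mod m = int i' mod m" by (simp only: mod_eq_dvd_iff)
    then show "i = i'" using \<open>i \<in> _\<close> \<open>i' \<in> _\<close> m_def by auto
  qed
  have grng: "g ` {0..<N-1} \<subseteq> {0..<m} - {b}"
  proof
    fix z assume "z \<in> g ` {0..<N-1}"
    then obtain i where i: "i < N - 1" "z = g i" by auto
    have "z \<noteq> b"
    proof
      assume "z = b"
      then have "(b + 1 + int i) mod m = b mod m" using i g_def assms m_def by simp
      then have "m dvd (b + 1 + int i) - b" by (simp only: mod_eq_dvd_iff)
      then have "m dvd 1 + int i" by simp
      moreover have "0 < 1 + int i" "1 + int i < m" using i m_def by auto
      ultimately show False using zdvd_imp_le by fastforce
    qed
    then show "z \<in> {0..<m} - {b}" using i g_def m0 by auto
  qed
  define t where "t = (r - int j * (b+1) - int (\<Sum>{0..<j})) mod m"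
  have t0: "0 \<le> t" "t < m" using m0 t_def by auto
  define s where "s = (\<Sum>{0..<j}) + nat t"
  obtain p q where pq: "j = 2 + p" "N = j + 3 + q" using assms by (metis add.commute le_Suc_ex)
  have big: "N - 1 \<le> j * (N - 1 - j)"
  proof -
    have "N - 1 - j = 2 + q" using pq by simp
    then show ?thesis using pq by (simp add: algebra_simps)
  qed
  have "nat t \<le> N - 1" using t0 m_def by linarith
  then have shi: "s \<le> (\<Sum>{0..<j}) + j * (N - 1 - j)" using big s_def by linarith
  have jle: "j \<le> N - 1" using assms by linarith
  have slo: "(\<Sum>{0..<j}) \<le> s" using s_def by simp
  obtain J where J: "J \<subseteq> {0..<N-1}" "card J = j" "\<Sum>J = s"
    using interval_sums[OF jle slo shi] by blast
  have ginjJ: "inj_on g J" using inj_on_subset[OF ginj J(1)] .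
  have "card (g ` J) = j" using card_image[OF ginjJ] J by simp
  moreover have "g ` J \<subseteq> {0..<m} - {b}" using J(1) grng by blast
  moreover have "(\<Sum>(g ` J)) mod m = r mod m"
  proof -
    have "(\<Sum>(g ` J)) = (\<Sum>i\<in>J. g i)" using sum.reindex[OF ginjJ] by simp
    also have "\<dots> mod m = (\<Sum>i\<in>J. b + 1 + int i) mod m" unfolding g_def by (rule mod_sum_eq)
    also have "(\<Sum>i\<in>J. b + 1 + int i) = int j * (b+1) + (\<Sum>i\<in>J. int i)"
      using J by (simp add: sum.distrib algebra_simps)
    also have "\<dots> = int j * (b+1) + int s" unfolding J(3)[symmetric] of_nat_sum by simp
    also have "\<dots> = int j * (b+1) + int (\<Sum>{0..<j}) + t" using s_def t0 by simp
    also have "\<dots> mod m = r mod m" unfolding t_def mod_add_right_eq by simp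
    finally show ?thesis .
  qed
  ultimately show ?thesis unfolding m_def by blast
qed



locale zsl =
  fixes N :: nat and a b :: int and X :: "(int \<times> int) set"
  assumes N4: "4 \<le> N" and Neven: "even N"
    and Xsub: "X \<subseteq> Zmod_sq (int N)"
    and Xcard: "card X = 2*N + 1"
    and a_rng: "0 \<le> a" "a < int N"
    and b_rng: "0 \<le> b" "b < int N"
    and Achar: "{x \<in> X. fst x = a} = Pair a ` ({0..<int N} - {b})"
begin

definition "A = {x \<in> X. fst x = a}"
definition "B = X - A"
definition "Done \<longleftrightarrow> (\<exists>S\<subseteq>X. card S = N \<and> zero_sum_mod (int N) S)"
definition "zs (U :: (int \<times> int) set) \<longleftrightarrow> int N dvd (\<Sum>x\<in>U. fst x - a)"

lemma finX: "finite X"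
proof -
  have "finite (Zmod_sq (int N))" unfolding Zmod_sq_def by simp
  then show ?thesis using Xsub finite_subset by blast
qed

lemma inX: "x \<in> X \<Longrightarrow> 0 \<le> fst x \<and> fst x < int N \<and> 0 \<le> snd x \<and> snd x < int N"
  using Xsub unfolding Zmod_sq_def by (cases x) auto

lemma finA: "finite A" and finB: "finite B" and AX: "A \<subseteq> X" and BX: "B \<subseteq> X"
  using finX unfolding A_def B_def by auto

lemma cardA: "card A = N - 1"
proof -
  have "card A = card ({0..<int N} - {b})"
    unfolding A_def Achar by (rule card_image) (simp add: inj_on_def)
  also have "\<dots> = N - 1" using b_rng by simp
  finally show ?thesis .
qed

lemma cardB: "card B = N + 2"
proof -
  have "card B = card X - card A" unfolding B_def using card_Diff_subset[OF finite_subset[OF AX finX] AX] by simp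
  then show ?thesis using cardA Xcard N4 by simp
qed

lemma Bfst: "x \<in> B \<Longrightarrow> fst x \<noteq> a" unfolding B_def A_def by auto

lemma inB: "x \<in> B \<Longrightarrow> 0 \<le> fst x \<and> fst x < int N \<and> 0 \<le> snd x \<and> snd x < int N"
  using inX BX by blast

lemma sumA: "(\<Sum>x\<in>A. snd x) = (\<Sum>{0..<int N}) - b"
proof -
  have "(\<Sum>x\<in>A. snd x) = (\<Sum>v\<in>{0..<int N} - {b}. snd (Pair a v))"
    unfolding A_def Achar by (rule sum.reindex_cong[where l="Pair a"]) (auto simp: inj_on_def)
  also have "\<dots> = (\<Sum>({0..<int N} - {b}))" by simp
  also have "\<dots> = (\<Sum>{0..<int N}) - b" using b_rng by (simp add: sum_diff1)
  finally show ?thesis .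
qed

lemma pickA:
  assumes "V \<subseteq> {0..<int N} - {b}"
  shows "Pair a ` V \<subseteq> A" "card (Pair a ` V) = card V" "(\<Sum>x\<in>Pair a ` V. snd x) = \<Sum>V"
proof -
  show "Pair a ` V \<subseteq> A" unfolding A_def Achar using assms by blast
  show "card (Pair a ` V) = card V" by (rule card_image) (simp add: inj_on_def)
  show "(\<Sum>x\<in>Pair a ` V. snd x) = \<Sum>V" by (subst sum.reindex) (auto simp: inj_on_def)
qed

lemma fill:
  assumes T: "T \<subseteq> B" "zs T" "card T \<le> N" and A': "A' \<subseteq> A" "card A' = N - card T"
    and sn: "int N dvd (\<Sum>x\<in>A'. snd x) + (\<Sum>x\<in>T. snd x)"
  shows Done
proof -
  have fT: "finite T" using T finB finite_subset by blast
  have fA: "finite A'" using A' finA finite_subset by blast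
  have disj: "T \<inter> A' = {}" using T A' unfolding B_def by blast
  define S where "S = T \<union> A'"
  have "S \<subseteq> X" using T A' AX BX S_def by blast
  moreover have "card S = N" using card_Un_disjoint[OF fT fA disj] S_def A' T by simp
  moreover have "zero_sum_mod (int N) S"
  proof -
    have fA': "(\<Sum>x\<in>A'. fst x) = int (card A') * a"
    proof -
      have "(\<Sum>x\<in>A'. fst x) = (\<Sum>x\<in>A'. a)" using A' unfolding A_def by (intro sum.cong) auto
      then show ?thesis by simp
    qed
    have fT': "(\<Sum>x\<in>T. fst x - a) = (\<Sum>x\<in>T. fst x) - int (card T) * a"
      by (simp add: sum_subtractf)
    have "(\<Sum>x\<in>S. fst x) = (\<Sum>x\<in>T. fst x) + (\<Sum>x\<in>A'. fst x)"
      unfolding S_def using sum.union_disjoint[OF fT fA disj] by simp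
    also have "\<dots> = (\<Sum>x\<in>T. fst x - a) + int N * a" using fA' fT' A' T by (simp add: algebra_simps of_nat_diff)
    finally have "int N dvd (\<Sum>x\<in>S. fst x)" using T(2) unfolding zs_def by simp
    moreover have "(\<Sum>x\<in>S. snd x) = (\<Sum>x\<in>A'. snd x) + (\<Sum>x\<in>T. snd x)"
      unfolding S_def using sum.union_disjoint[OF fT fA disj] by (simp add: add.commute)
    ultimately show ?thesis unfolding zero_sum_mod_def using sn by simp
  qed
  ultimately show ?thesis unfolding Done_def by blast
qed

lemma L_G:
  assumes "T \<subseteq> B" "zs T" "3 \<le> card T" "card T + 2 \<le> N"
  shows Done
proof -
  define j where "j = N - card T"
  have j: "2 \<le> j" "j + 3 \<le> N" using assms j_def by auto
  obtain V where V: "V \<subseteq> {0..<int N} - {b}" "card V = j"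
      "(\<Sum>V) mod int N = (- (\<Sum>x\<in>T. snd x)) mod int N"
    using AS_core[OF j b_rng] by blast
  have "int N dvd (\<Sum>V) - (- (\<Sum>x\<in>T. snd x))" using V(3) mod_eq_dvd_iff by blast
  then have "int N dvd (\<Sum>x\<in>Pair a ` V. snd x) + (\<Sum>x\<in>T. snd x)" using pickA(3)[OF V(1)] by simp
  then show ?thesis using fill[OF assms(1,2) _ pickA(1)[OF V(1)]] pickA(2)[OF V(1)] V(2) j_def assms by simp
qed

lemma L_P:
  assumes "T \<subseteq> B" "zs T" "card T = 2" "((\<Sum>x\<in>A. snd x) + (\<Sum>x\<in>T. snd x)) mod int N \<noteq> b"
  shows Done
proof -
  define c where "c = ((\<Sum>x\<in>A. snd x) + (\<Sum>x\<in>T. snd x)) mod int N"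
  have c: "0 \<le> c" "c < int N" "c \<noteq> b" using assms c_def N4 by auto
  have cA: "(a, c) \<in> A" unfolding A_def Achar using c by auto
  define A' where "A' = A - {(a,c)}"
  have cA': "card A' = N - card T" using cA cardA finA A'_def assms by simp
  have e1: "(\<Sum>x\<in>A'. snd x) = (\<Sum>x\<in>A. snd x) - c" using cA finA A'_def by (simp add: sum_diff1)
  have dv: "int N dvd ((\<Sum>x\<in>A. snd x) + (\<Sum>x\<in>T. snd x)) - c" unfolding c_def by (rule dvd_minus_mod)
  have eq: "(\<Sum>x\<in>A'. snd x) + (\<Sum>x\<in>T. snd x) = ((\<Sum>x\<in>A. snd x) + (\<Sum>x\<in>T. snd x)) - c"
    using e1 by linarith
  have dv2: "int N dvd (\<Sum>x\<in>A'. snd x) + (\<Sum>x\<in>T. snd x)" unfolding eq by (rule dv)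
  have "A' \<subseteq> A" unfolding A'_def by blast
  then show ?thesis using fill[OF assms(1,2) _ _ cA' dv2] assms N4 by simp
qed

lemma L_M1:
  assumes "T \<subseteq> B" "zs T" "card T = N - 1" "(- (\<Sum>x\<in>T. snd x)) mod int N \<noteq> b"
  shows Done
proof -
  define c where "c = (- (\<Sum>x\<in>T. snd x)) mod int N"
  have c: "0 \<le> c" "c < int N" "c \<noteq> b" using assms c_def N4 by auto
  have cA: "(a, c) \<in> A" unfolding A_def Achar using c by auto
  have "int N dvd c - (- (\<Sum>x\<in>T. snd x))" unfolding c_def by (metis dvd_minus_mod dvd_minus_iff minus_diff_eq)
  then have "int N dvd (\<Sum>x\<in>{(a,c)}. snd x) + (\<Sum>x\<in>T. snd x)" by simp
  then show ?thesis using fill[OF assms(1,2), of "{(a,c)}"] assms cA N4 by simp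
qed

lemma L_M:
  assumes "T \<subseteq> B" "zs T" "card T = N" "int N dvd (\<Sum>x\<in>T. snd x)"
  shows Done
  using fill[OF assms(1,2), of "{}"] assms by simp

lemma L_F:
  assumes T: "T \<subseteq> B" "zs T" "card T = 2 \<or> card T = N - 1" and t: "t \<in> T" and e: "e \<in> B" "e \<notin> T"
    and fe: "fst t = fst e"
  shows Done
proof -
  have fT: "finite T" using T finB finite_subset by blast
  define T' where "T' = insert e (T - {t})"
  have T'B: "T' \<subseteq> B" using T e T'_def by blast
  have "card T > 0" using fT t card_gt_0_iff by blast
  then have cT': "card T' = card T" using fT t e T'_def by (simp add: card_insert_if)
  have sw: "\<And>f :: int \<times> int \<Rightarrow> int. (\<Sum>x\<in>T'. f x) = (\<Sum>x\<in>T. f x) - f t + f e"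
    using fT t e T'_def by (simp add: sum.remove[OF fT t] algebra_simps)
  have zT': "zs T'" using T(2) sw[of "\<lambda>x. fst x - a"] fe unfolding zs_def by simp
  have ne: "snd t \<noteq> snd e" using fe t e by (metis prod.expand)
  have "t \<in> B" using t T by blast
  then have rt: "0 \<le> snd t" "snd t < int N" "0 \<le> snd e" "snd e < int N" using inB[of t] inB[of e] e by auto
  define s1 where "s1 = (\<Sum>x\<in>T. snd x)"
  define s2 where "s2 = (\<Sum>x\<in>T'. snd x)"
  have s12: "s2 = s1 - snd t + snd e" using sw s1_def s2_def by simp
  have dif: "\<And>c. (c + s1) mod int N \<noteq> (c + s2) mod int N"
  proof
    fix c assume "(c + s1) mod int N = (c + s2) mod int N"
    then have "int N dvd (c + s1) - (c + s2)" using mod_eq_dvd_iff by blast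
    then have "int N dvd snd t - snd e" using s12 by simp
    then have "snd t mod int N = snd e mod int N" using mod_eq_dvd_iff by blast
    then have "snd t = snd e" using same_res[of "snd t" "int N" "snd e" 0] rt by simp
    then show False using ne by simp
  qed
  show Done
  proof (cases "card T = 2")
    case True
    show ?thesis
    proof (cases "((\<Sum>x\<in>A. snd x) + s1) mod int N \<noteq> b")
      case True then show ?thesis using L_P[OF T(1,2)] \<open>card T = 2\<close> s1_def by simp
    next
      case False
      then have "((\<Sum>x\<in>A. snd x) + s2) mod int N \<noteq> b" using dif by metis
      then show ?thesis using L_P[OF T'B zT'] cT' True s2_def by simp
    qed
  next
    case False
    then have c: "card T = N - 1" using T by simp
    show ?thesis
    proof (cases "(- s1) mod int N \<noteq> b")
      case True then show ?thesis using L_M1[OF T(1,2) c] s1_def by simp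
    next
      case False
      then have "(- s2) mod int N \<noteq> b" using dif[of "- s1 - s2"] by (simp add: algebra_simps)
      then show ?thesis using L_M1[OF T'B zT'] cT' c s2_def by simp
    qed
  qed
qed

end


context zsl begin

definition "Hfree (W :: (int \<times> int) set) \<longleftrightarrow> (\<forall>U\<subseteq>W. 1 \<le> card U \<longrightarrow> card U + 2 \<le> N \<longrightarrow> \<not> zs U)"

lemma col_bound:
  assumes "W \<subseteq> B" "\<And>x. x \<in> W \<Longrightarrow> fst x = c"
  shows "card W \<le> N"
proof -
  have "inj_on snd W"
    using assms by (intro inj_onI) (metis prod.expand)
  moreover have "snd ` W \<subseteq> {0..<int N}" using assms inB by fastforce
  ultimately have "card W \<le> card {0..<int N}" by (intro card_inj_on_le) auto
  then show ?thesis by simp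
qed

lemma dres:
  assumes "x \<in> B" "y \<in> B" "int N dvd (fst x - a) - (fst y - a)"
  shows "fst x = fst y"
proof -
  have "(fst x - a) mod int N = (fst y - a) mod int N" using assms(3) mod_eq_dvd_iff by blast
  then show ?thesis using same_res inB assms by blast
qed

lemma dnz:
  assumes "x \<in> B" shows "\<not> int N dvd (fst x - a)"
proof
  assume "int N dvd (fst x - a)"
  then have "(fst x - a) mod int N = (a - a) mod int N" by simp
  then have "fst x = a" using same_res[of "fst x" "int N" a a] inB[OF assms] a_rng by blast
  then show False using Bfst assms by blast
qed

lemma Z1:
  assumes W: "W \<subseteq> B" "Hfree W" and E: "E \<subseteq> W" "card E = N - 1" "\<not> zs E"
    and xy: "x \<in> E" "y \<in> E"
  shows "fst x = fst y"
proof (rule ccontr)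
  assume nxy: "fst x \<noteq> fst y"
  then have xney: "x \<noteq> y" by blast
  have fW: "finite W" using W finB finite_subset by blast
  have fE: "finite E" using E fW finite_subset by blast
  have EB: "E \<subseteq> B" using E W by blast
  have xW: "x \<in> W" and yW: "y \<in> W" using xy E by auto
  define dd where "dd z = fst z - a" for z :: "int \<times> int"
  have Hd: "\<And>U. U \<subseteq> W \<Longrightarrow> 1 \<le> card U \<Longrightarrow> card U + 2 \<le> N \<Longrightarrow> \<not> int N dvd (\<Sum>z\<in>U. dd z)"
    using W(2) unfolding Hfree_def zs_def dd_def by blast
  define R where "R = E - {x, y}"
  have cR: "card R = N - 3" using xy xney fE E(2) R_def by (simp add: card_Diff_subset)
  have fR: "finite R" using fE R_def by simp
  obtain f where f: "bij_betw f {0..<N-3} R" using ex_bij_betw_nat_finite[OF fR] cR by metis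
  have finj: "inj_on f {0..<N-3}" and fim: "f ` {0..<N-3} = R" using f by (auto simp: bij_betw_def)
  define F where "F i = f ` {0..<i}" for i
  define s where "s i = (\<Sum>z\<in>F i. dd z)" for i
  have FR: "\<And>i. i \<le> N - 3 \<Longrightarrow> F i \<subseteq> R" using fim F_def by auto
  have cF: "\<And>i. i \<le> N - 3 \<Longrightarrow> card (F i) = i"
  proof -
    fix i assume "i \<le> N - 3"
    then have "inj_on f {0..<i}" by (intro inj_on_subset[OF finj]) auto
    then show "card (F i) = i" unfolding F_def by (simp add: card_image)
  qed
  have xyR: "x \<notin> R" "y \<notin> R" using R_def by auto
  have RW: "R \<subseteq> W" using R_def E by blast
  have FW: "\<And>i. i \<le> N - 3 \<Longrightarrow> F i \<subseteq> W" using FR RW by blast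
  have FN: "F (N-3) = R" using fim F_def by simp
  have sdiff: "\<And>i j. i \<le> j \<Longrightarrow> j \<le> N - 3 \<Longrightarrow> s j - s i = (\<Sum>z\<in>f ` {i..<j}. dd z)
                 \<and> card (f ` {i..<j}) = j - i \<and> f ` {i..<j} \<subseteq> R"
  proof -
    fix i j :: nat assume ij: "i \<le> j" "j \<le> N - 3"
    have "{0..<j} = {0..<i} \<union> {i..<j}" using ij by auto
    then have un: "F j = F i \<union> f ` {i..<j}" unfolding F_def by (simp add: image_Un)
    have inj': "inj_on f {0..<j}" using inj_on_subset[OF finj] ij by auto
    have disj: "F i \<inter> f ` {i..<j} = {}"
    proof -
      have "f ` ({0..<i} \<inter> {i..<j}) = f ` {0..<i} \<inter> f ` {i..<j}"
        by (rule inj_on_image_Int[OF inj']) (use ij in auto)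
      then show ?thesis unfolding F_def by simp
    qed
    have "s j = s i + (\<Sum>z\<in>f ` {i..<j}. dd z)"
      unfolding s_def un by (rule sum.union_disjoint[OF _ _ disj]) (auto simp: F_def)
    moreover have "card (f ` {i..<j}) = j - i"
    proof -
      have "inj_on f {i..<j}" by (intro inj_on_subset[OF inj']) auto
      then show ?thesis by (simp add: card_image)
    qed
    moreover have "f ` {i..<j} \<subseteq> R" using fim ij by auto
    ultimately show "s j - s i = (\<Sum>z\<in>f ` {i..<j}. dd z) \<and> card (f ` {i..<j}) = j - i \<and> f ` {i..<j} \<subseteq> R"
      by simp
  qed
  have sins: "\<And>i z. i \<le> N - 3 \<Longrightarrow> z \<notin> R \<Longrightarrow> (\<Sum>w\<in>insert z (F i). dd w) = dd z + s i
               \<and> card (insert z (F i)) = i + 1"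
  proof -
    fix i z assume "i \<le> N - 3" "z \<notin> R"
    then have "z \<notin> F i" "finite (F i)" using FR F_def by auto
    then show "(\<Sum>w\<in>insert z (F i). dd w) = dd z + s i \<and> card (insert z (F i)) = i + 1"
      using cF \<open>i \<le> N-3\<close> s_def by simp
  qed
  have N4': "4 \<le> N" using N4 .
  define \<alpha> where "\<alpha> i = (if i = 0 then 0 else if i = 1 then dd y else dd x + dd y + s (i - 2))" for i
  have dist: "\<And>i j. i < j \<Longrightarrow> j < N \<Longrightarrow> \<alpha> i mod int N \<noteq> \<alpha> j mod int N"
  proof
    fix i j assume ij: "i < j" "j < N" and eq: "\<alpha> i mod int N = \<alpha> j mod int N"
    then have dv: "int N dvd \<alpha> j - \<alpha> i" using mod_eq_dvd_iff by metis
    show False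
    proof (cases "i = 0")
      case i0: True
      show False
      proof (cases "j = 1")
        case True
        then show False using Hd[of "{y}"] dv i0 \<alpha>_def yW N4 by simp
      next
        case False
        then have j2: "j \<ge> 2" using ij i0 by simp
        define U where "U = insert x (insert y (F (j-2)))"
        have jle: "j - 2 \<le> N - 3" using ij by simp
        have xF: "x \<notin> F (j-2)" "y \<notin> F (j-2)" using FR[OF jle] xyR by auto
        have finF: "finite (F (j-2))" by (simp add: F_def)
        have sU: "(\<Sum>z\<in>U. dd z) = \<alpha> j"
          using xF finF xney j2 unfolding U_def \<alpha>_def s_def by simp
        have cU: "card U = j"
          using xF finF xney j2 cF[OF jle] unfolding U_def by simp
        have UW: "U \<subseteq> W" using FW[of "j-2"] ij xW yW U_def by auto
        show False
        proof (cases "j + 2 \<le> N")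
          case True
          moreover have "\<alpha> i = 0" using i0 \<alpha>_def by simp
          ultimately show False using Hd[OF UW] sU cU dv j2 by simp
        next
          case False
          then have "j = N - 1" using ij by simp
          then have "j - 2 = N - 3" by simp
          then have "F (j-2) = R" using FN by simp
          then have "U = E" using xy unfolding U_def R_def by auto
          moreover have "\<alpha> i = 0" using i0 \<alpha>_def by simp
          ultimately have "int N dvd (\<Sum>z\<in>E. dd z)" using sU dv by simp
          then show False using E(3) unfolding zs_def dd_def by simp
        qed
      qed
    next
      case False
      show False
      proof (cases "i = 1")
        case i1: True
        then have j2: "j \<ge> 2" using ij by simp
        define U where "U = insert x (F (j-2))"
        have jle: "j - 2 \<le> N - 3" using ij by simp
        note si = sins[OF jle xyR(1)]
        have "(\<Sum>z\<in>U. dd z) = \<alpha> j - \<alpha> i" using si j2 i1 unfolding U_def \<alpha>_def by simp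
        moreover have "card U = j - 1" using si j2 unfolding U_def by simp
        moreover have "U \<subseteq> W" using FW[OF jle] xW U_def by auto
        ultimately have "U \<subseteq> W" "1 \<le> card U" "card U + 2 \<le> N" "int N dvd (\<Sum>z\<in>U. dd z)"
          using dv ij j2 by auto
        then show False using Hd by blast
      next
        case False
        then have i2: "i \<ge> 2" using \<open>i \<noteq> 0\<close> by simp
        have "\<alpha> j - \<alpha> i = s (j-2) - s (i-2)" using i2 ij \<alpha>_def by simp
        moreover have "i - 2 \<le> j - 2" "j - 2 \<le> N - 3" using i2 ij by auto
        note sd = sdiff[OF this]
        have sub: "f ` {i-2..<j-2} \<subseteq> W" using sd RW by blast
        have "card (f ` {i-2..<j-2}) = j - i" using sd i2 ij by simp
        moreover have "1 \<le> j - i" "j - i + 2 \<le> N" using ij i2 by auto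
        ultimately show False using Hd[OF sub] sd dv by (metis (no_types, lifting))
      qed
    qed
  qed
  have "0 \<le> dd x mod int N" "dd x mod int N < int N" using N4 by auto
  then obtain i where i: "i < N" "\<alpha> i mod int N = dd x mod int N"
    using pigeon[of N \<alpha> "dd x mod int N"] dist N4 by auto
  show False
  proof (cases "i = 0")
    case True
    then show False using i Hd[of "{x}"] xW N4 \<alpha>_def by (simp add: dvd_eq_mod_eq_0)
  next
    case False
    show False
    proof (cases "i = 1")
      case True
      then have "dd y mod int N = dd x mod int N" using i(2) unfolding \<alpha>_def by simp
      then have "int N dvd (fst y - a) - (fst x - a)" unfolding dd_def by (simp only: mod_eq_dvd_iff)
      then have "fst y = fst x" using dres[of y x] xy EB by blast
      then show False using nxy by simp
    next
      case False
      then have i2: "i \<ge> 2" using \<open>i \<noteq> 0\<close> by simp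
      define U where "U = insert y (F (i-2))"
      have ile: "i - 2 \<le> N - 3" using i by simp
      note si = sins[OF ile xyR(2)]
      have "(\<Sum>z\<in>U. dd z) = \<alpha> i - dd x" using si i2 unfolding U_def \<alpha>_def by simp
      moreover have "card U = i - 1" using si i2 unfolding U_def by simp
      moreover have "U \<subseteq> W" using FW[OF ile] yW U_def by auto
      moreover have "int N dvd \<alpha> i - dd x" using i(2) mod_eq_dvd_iff by blast
      ultimately have "U \<subseteq> W" "1 \<le> card U" "card U + 2 \<le> N" "int N dvd (\<Sum>z\<in>U. dd z)"
        using i i2 by auto
      then show False using Hd by blast
    qed
  qed
qed

end


context zsl begin

lemma Z2:
  assumes W: "W \<subseteq> B" "Hfree W" "N \<le> card W" and xy: "x \<in> W" "y \<in> W" "fst x \<noteq> fst y"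
  shows Done
proof -
  have fW: "finite W" using W finB finite_subset by blast
  have xney: "x \<noteq> y" using xy by blast
  have "card (W - {x, y}) = card W - 2" using xy xney fW by (simp add: card_Diff_subset)
  then have "N - 3 \<le> card (W - {x, y})" using W by simp
  then obtain R where R: "R \<subseteq> W - {x, y}" "card R = N - 3" "finite R"
    by (meson obtain_subset_with_card_n)
  define E where "E = insert x (insert y R)"
  have xyR: "x \<notin> R" "y \<notin> R" using R by auto
  have cE: "card E = N - 1" using R xyR xney N4 unfolding E_def by simp
  have EW: "E \<subseteq> W" using R xy unfolding E_def by auto
  have EB: "E \<subseteq> B" using EW W by blast
  have fE: "finite E" using R unfolding E_def by simp
  have zE: "zs E"
  proof (rule ccontr)
    assume "\<not> zs E"
    moreover have "x \<in> E" "y \<in> E" unfolding E_def by auto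
    ultimately have "fst x = fst y" by (rule Z1[OF W(1,2) EW cE])
    then show False using xy by simp
  qed
  have "\<not> W \<subseteq> E"
  proof
    assume "W \<subseteq> E"
    then have "card W \<le> card E" using card_mono[OF fE] by blast
    then show False using cE W N4 by simp
  qed
  then obtain e where e: "e \<in> W" "e \<notin> E" by blast
  have eB: "e \<in> B" using e W by blast
  have xE: "x \<in> E" and yE: "y \<in> E" unfolding E_def by auto
  show Done
  proof (cases "fst e = fst x")
    case True
    then show ?thesis using L_F[OF EB zE disjI2[OF cE] xE eB e(2)] by simp
  next
    case False
    define E1 where "E1 = insert e (E - {x})"
    have E1W: "E1 \<subseteq> W" using EW e unfolding E1_def by blast
    have cE1: "card E1 = N - 1" using cE fE xE e N4 unfolding E1_def by (simp add: card_insert_if)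
    have sE1: "(\<Sum>z\<in>E1. fst z - a) = (fst e - a) + ((\<Sum>z\<in>E. fst z - a) - (fst x - a))"
      using fE xE e unfolding E1_def by (simp add: sum_diff1)
    have "\<not> zs E1"
    proof
      assume "zs E1"
      then have "int N dvd (\<Sum>z\<in>E1. fst z - a) - (\<Sum>z\<in>E. fst z - a)" using zE unfolding zs_def by simp
      then have "int N dvd (fst e - a) - (fst x - a)" using sE1 by simp
      moreover have "x \<in> B" using xy W by blast
      ultimately have "fst e = fst x" using dres[OF eB] by blast
      then show False using False by simp
    qed
    moreover have "y \<in> E1" "e \<in> E1" using xney unfolding E1_def E_def by auto
    ultimately have "fst y = fst e" by (rule Z1[OF W(1,2) E1W cE1])
    then show ?thesis using L_F[OF EB zE disjI2[OF cE] yE eB e(2)] by simp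
  qed
qed

lemma Wcase:
  assumes W: "W \<subseteq> B" "N \<le> card W" and nopair: "\<And>U. U \<subseteq> W \<Longrightarrow> card U = 2 \<Longrightarrow> \<not> zs U"
  shows "Done \<or> (Hfree W \<and> (\<exists>c. \<forall>z\<in>W. fst z = c))"
proof (cases "\<exists>U\<subseteq>W. zs U \<and> 3 \<le> card U \<and> card U + 2 \<le> N")
  case True
  then obtain U where "U \<subseteq> W" "zs U" "3 \<le> card U" "card U + 2 \<le> N" by blast
  then have Done using L_G W by blast
  then show ?thesis by simp
next
  case False
  have H: "Hfree W" unfolding Hfree_def
  proof (intro allI impI)
    fix U assume U: "U \<subseteq> W" "1 \<le> card U" "card U + 2 \<le> N"
    show "\<not> zs U"
    proof (cases "card U = 1")
      case True
      then obtain z where "U = {z}" using card_1_singletonE by blast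
      then show ?thesis using dnz[of z] U W unfolding zs_def by auto
    next
      case c1: False
      show ?thesis
      proof (cases "card U = 2")
        case True then show ?thesis using nopair U by blast
      next
        case False then show ?thesis using \<open>\<not> (\<exists>U\<subseteq>W. _)\<close> U c1 by auto
      qed
    qed
  qed
  show ?thesis
  proof (cases "\<exists>x\<in>W. \<exists>y\<in>W. fst x \<noteq> fst y")
    case True
    then show ?thesis using Z2[OF W(1) H W(2)] by blast
  next
    case False
    have "W \<noteq> {}" using W N4 by auto
    then obtain w where "w \<in> W" by blast
    then have "\<forall>z\<in>W. fst z = fst w" using False by blast
    then show ?thesis using H by blast
  qed
qed

lemma main: Done
proof (cases "\<exists>P\<subseteq>B. card P = 2 \<and> zs P")
  case False
  have "Done \<or> (Hfree B \<and> (\<exists>c. \<forall>z\<in>B. fst z = c))"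
    by (rule Wcase) (use False cardB in auto)
  moreover have "\<not> (\<exists>c. \<forall>z\<in>B. fst z = c)"
  proof
    assume "\<exists>c. \<forall>z\<in>B. fst z = c"
    then obtain c where "\<forall>z\<in>B. fst z = c" by blast
    then have "card B \<le> N" using col_bound[of B c] by blast
    then show False using cardB by simp
  qed
  ultimately show Done by blast
next
  case True
  then obtain P where P: "P \<subseteq> B" "card P = 2" "zs P" by blast
  have fP: "finite P" using finite_subset[OF P(1) finB] .
  show Done
  proof (cases "\<exists>P'\<subseteq>B - P. card P' = 2 \<and> zs P'")
    case True
    then obtain P' where P': "P' \<subseteq> B - P" "card P' = 2" "zs P'" by blast
    have fP': "finite P'" using P'(1) finB finite_subset by blast
    have disj: "P \<inter> P' = {}" using P' by blast
    define T where "T = P \<union> P'"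
    have TB: "T \<subseteq> B" using P P' T_def by blast
    have cT: "card T = 4" using card_Un_disjoint[OF fP fP' disj] P P' T_def by simp
    have sT: "\<And>f :: int \<times> int \<Rightarrow> int. (\<Sum>z\<in>T. f z) = (\<Sum>z\<in>P. f z) + (\<Sum>z\<in>P'. f z)"
      using sum.union_disjoint[OF fP fP' disj] T_def by simp
    have zT: "zs T" using P(3) P'(3) sT unfolding zs_def by simp
    show Done
    proof (cases "6 \<le> N")
      case True
      then show ?thesis using L_G[OF TB zT] cT by simp
    next
      case False
      then have N4e: "N = 4" using N4 Neven by presburger
      show Done
      proof (cases "((\<Sum>x\<in>A. snd x) + (\<Sum>x\<in>P. snd x)) mod int N \<noteq> b")
        case True then show ?thesis using L_P[OF P(1,3,2)] by simp
      next
        case F1: False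
        show Done
        proof (cases "((\<Sum>x\<in>A. snd x) + (\<Sum>x\<in>P'. snd x)) mod int N \<noteq> b")
          case True then show ?thesis using L_P[of P'] P' by auto
        next
          case F2: False
          have "{0..<int N} = {0,1,2,3}" using N4e by auto
          then have sA: "(\<Sum>x\<in>A. snd x) = 6 - b" using sumA by simp
          have "(6 - b + (\<Sum>x\<in>P. snd x)) mod 4 = b" "(6 - b + (\<Sum>x\<in>P'. snd x)) mod 4 = b"
            using F1 F2 sA N4e by auto
          then have "(4::int) dvd (\<Sum>x\<in>P. snd x) + (\<Sum>x\<in>P'. snd x)" by presburger
          then have "int N dvd (\<Sum>x\<in>T. snd x)" using sT N4e by simp
          then show ?thesis using L_M[OF TB zT] cT N4e by simp
        qed
      qed
    qed
  next
    case False
    define W where "W = B - P"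
    have WB: "W \<subseteq> B" using W_def by blast
    have cW: "card W = N" using cardB P fP W_def by (simp add: card_Diff_subset)
    have np: "\<And>U. U \<subseteq> W \<Longrightarrow> card U = 2 \<Longrightarrow> \<not> zs U" using False W_def by blast
    have "N \<le> card W" using cW by simp
    note wc = Wcase[OF WB this np]
    {
      assume H: "Hfree W" and "\<exists>c. \<forall>z\<in>W. fst z = c"
      then obtain c where c: "\<And>z. z \<in> W \<Longrightarrow> fst z = c" by blast
      have "P \<noteq> {}" using P by auto
      then obtain x where xP: "x \<in> P" by blast
      have xB: "x \<in> B" and xW: "x \<notin> W" using xP P W_def by auto
      have fW: "finite W" using finB W_def by simp
      have "W \<noteq> {}" using cW N4 by auto
      then obtain w where wW: "w \<in> W" by blast
      have wB: "w \<in> B" using wW WB by blast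
      define g where "g = c - a"
      have sU: "\<And>U. U \<subseteq> W \<Longrightarrow> (\<Sum>z\<in>U. fst z - a) = int (card U) * g"
      proof -
        fix U assume "U \<subseteq> W"
        then have "(\<Sum>z\<in>U. fst z - a) = (\<Sum>z\<in>U. g)" using c g_def by (intro sum.cong) auto
        then show "(\<Sum>z\<in>U. fst z - a) = int (card U) * g" by simp
      qed
      have Hd: "\<And>k. 1 \<le> k \<Longrightarrow> k + 2 \<le> N \<Longrightarrow> \<not> int N dvd int k * g"
      proof
        fix k assume k: "1 \<le> k" "k + 2 \<le> N" "int N dvd int k * g"
        obtain U where U: "U \<subseteq> W" "card U = k" "finite U"
          using obtain_subset_with_card_n[of k W] cW k by auto
        then have "zs U" using sU k unfolding zs_def by simp
        then show False using H U k unfolding Hfree_def by blast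
      qed
      have gw: "g = fst w - a" using c[OF wW] g_def by simp
      define \<beta> where "\<beta> k = (fst x - a) + int k * g" for k :: nat
      have dist: "\<And>i j. i < j \<Longrightarrow> j < N \<Longrightarrow> \<beta> i mod int N \<noteq> \<beta> j mod int N"
      proof
        fix i j :: nat assume ij: "i < j" "j < N" "\<beta> i mod int N = \<beta> j mod int N"
        then have "int N dvd \<beta> j - \<beta> i" using mod_eq_dvd_iff by metis
        moreover have "\<beta> j - \<beta> i = int (j - i) * g" using ij unfolding \<beta>_def by (simp add: of_nat_diff algebra_simps)
        ultimately have dv: "int N dvd int (j - i) * g" by simp
        show False
        proof (cases "j - i + 2 \<le> N")
          case True then show False using Hd[of "j - i"] dv ij by simp
        next
          case False
          then have "j - i = N - 1" using ij by simp
          then have "int N dvd (int N - 1) * g" using dv N4 by (simp add: of_nat_diff)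
          then have "int N dvd int N * g - (int N - 1) * g" by (simp add: dvd_diff)
          then have "int N dvd g" by (simp add: algebra_simps)
          then show False using dnz[OF wB] gw by simp
        qed
      qed
      obtain k where k: "k < N" "\<beta> k mod int N = 0"
        using pigeon[of N \<beta> 0] dist N4 by auto
      have kdv: "int N dvd \<beta> k" using k(2) by (simp add: dvd_eq_mod_eq_0)
      have k0: "k \<noteq> 0"
      proof
        assume "k = 0"
        then have "int N dvd fst x - a" using kdv unfolding \<beta>_def by simp
        then show False using dnz[OF xB] by simp
      qed
      have kN: "k \<noteq> N - 1"
      proof
        assume kN1: "k = N - 1"
        have "int N dvd \<beta> k - int N * g" using kdv by (simp add: dvd_diff)
        moreover have "\<beta> k - int N * g = (fst x - a) - (fst w - a)"
          using kN1 N4 gw unfolding \<beta>_def by (simp add: of_nat_diff algebra_simps)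
        ultimately have "fst x = fst w" using dres[OF xB wB] by simp
        then have "\<And>z. z \<in> insert x W \<Longrightarrow> fst z = c" using c wW by auto
        then have "card (insert x W) \<le> N" using col_bound[of "insert x W" c] xB WB by blast
        then show False using cW xW fW by simp
      qed
      obtain K where K: "K \<subseteq> W" "card K = k" "finite K"
        using obtain_subset_with_card_n[of k W] cW k by auto
      define T where "T = insert x K"
      have xK: "x \<notin> K" using xW K by blast
      have TB: "T \<subseteq> B" using K WB xB T_def by blast
      have cT: "card T = k + 1" using K xK T_def by simp
      have "(\<Sum>z\<in>T. fst z - a) = \<beta> k" using K xK sU[OF K(1)] unfolding T_def \<beta>_def by simp
      then have zT: "zs T" using kdv unfolding zs_def by simp
      have Done
      proof (cases "3 \<le> k + 1 \<and> k + 1 + 2 \<le> N")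
        case True then show ?thesis using L_G[OF TB zT] cT by simp
      next
        case False
        then have ck: "card T = 2 \<or> card T = N - 1" using cT k k0 kN by auto
        have "K \<noteq> {}" using K k0 by auto
        then obtain t where tK: "t \<in> K" by blast
        have "\<not> W \<subseteq> K"
        proof
          assume "W \<subseteq> K"
          then have "card W \<le> card K" using card_mono[OF K(3)] by blast
          then show False using K cW k by simp
        qed
        then obtain e where e: "e \<in> W" "e \<notin> K" by blast
        have eT: "e \<notin> T" using e xW T_def by auto
        have "t \<in> W" using tK K by blast
        then have "fst t = fst e" using c[of t] c[of e] e by simp
        moreover have "t \<in> T" using tK T_def by simp
        moreover have "e \<in> B" using e WB by blast
        ultimately show Done using L_F[OF TB zT ck _ _ eT] by blast
      qed
    }
    with wc show Done by blast
  qed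
qed

end

theorem theorem3p2:
  fixes n :: nat and X :: "(int \<times> int) set"
  assumes "n \<ge> 2"
    and "X \<subseteq> Zmod_sq (2 * int n)"
    and "card X = 4 * n + 1"
    and "\<exists>a \<in> {0..<2 * int n}. card {x \<in> X. fst x = a} = 2 * n - 1"
  shows "\<exists>S \<subseteq> X. card S = 2 * n \<and> zero_sum_mod (2 * int n) S"
proof -
  define N where "N = 2 * n"
  have iN: "int N = 2 * int n" using N_def by simp
  obtain a where a: "0 \<le> a" "a < int N" "card {x \<in> X. fst x = a} = N - 1"
    using assms(4) iN N_def by auto
  define A0 where "A0 = {x \<in> X. fst x = a}"
  have inX: "\<And>x. x \<in> X \<Longrightarrow> 0 \<le> snd x \<and> snd x < int N"
    using assms(2) iN unfolding Zmod_sq_def by auto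
  have injA: "inj_on snd A0" unfolding A0_def by (intro inj_onI) (metis (mono_tags, lifting) mem_Collect_eq prod.expand)
  have sA: "snd ` A0 \<subseteq> {0..<int N}" using inX A0_def by auto
  have cA: "card (snd ` A0) = N - 1" using card_image[OF injA] a A0_def by simp
  have "card ({0..<int N} - snd ` A0) = N - (N - 1)"
    using card_Diff_subset[OF finite_subset[OF sA] sA] cA by simp
  also have "\<dots> = 1" using assms(1) N_def by simp
  finally obtain b where b: "{0..<int N} - snd ` A0 = {b}" using card_1_singletonE by blast
  have brng: "0 \<le> b" "b < int N" using b by auto
  have sAe: "snd ` A0 = {0..<int N} - {b}" using b sA by blast
  have "A0 = Pair a ` (snd ` A0)" unfolding A0_def by force
  then have Achar: "{x \<in> X. fst x = a} = Pair a ` ({0..<int N} - {b})" using sAe A0_def by simp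
  have l1: "4 \<le> N" "even N" "card X = 2 * N + 1" using assms(1,3) N_def by auto
  have l2: "X \<subseteq> Zmod_sq (int N)" using assms(2) iN by simp
  interpret zsl N a b X
    by unfold_locales (use l1 l2 a brng Achar in auto)
  have Done by (rule main)
  then have "\<exists>S\<subseteq>X. card S = N \<and> zero_sum_mod (int N) S" unfolding Done_def .
  then show ?thesis using iN N_def by simp
qed


end
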